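(* Let $p$ be a prime, let $n\in\mathbb{N}$ and set $q=p^n$. The number of solutions $(a_2,a_3,a_4,b_2,b_3,b_4)\in(\mathbb{Z}/q\mathbb{Z})^6$ to the system \[ a_2b_3-a_3b_2 = a_2b_4-a_4b_2 = a_3b_4-a_4b_3 = 0 \] which additionally satisfy $a_2b_3=a_3b_2=0$ is $O(n^2q^{7/2})$, with an absolute implied constant. *)

theory Defs
  imports Complex_Main "HOL-Number_Theory.Cong"
begin

definition sol_set :: "nat \<Rightarrow> (nat \<times> nat \<times> nat \<times> nat \<times> nat \<times> nat) set" where
  "sol_set q = {(a2, a3, a4, b2, b3, b4).
      a2 < q \<and> a3 < q \<and> a4 < q \<and> b2 < q \<and> b3 < q \<and> b4 < q \<and>
      [a2 * b3 = a3 * b2] (mod q) \<and>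
      [a2 * b4 = a4 * b2] (mod q) \<and>
      [a3 * b4 = a4 * b3] (mod q) \<and>
      [a2 * b3 = 0] (mod q) \<and>
      [a3 * b2 = 0] (mod q)}"

end

theory Submission
  imports Defs "HOL-Computational_Algebra.Primes"
begin

lemma cancel_gcd:
  fixes u q y1 y2 :: nat
  assumes q: "q > 0" and h: "[u*y1 = u*y2] (mod q)"
  shows "[y1 = y2] (mod (q div gcd u q))"
proof -
  define g where "g = gcd u q"
  have g0: "g > 0" using q g_def by simp
  obtain u' m where u: "u = g*u'" and m: "q = g*m" unfolding g_def by (meson gcd_dvd1 gcd_dvd2 dvdE)
  have cop: "coprime u' m" using g0 u m g_def
    by (metis gcd_coprime gcd_dvd1 gcd_dvd2 dvd_div_mult_self mult.commute nonzero_mult_div_cancel_left less_numeral_extra(3))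
  have "int q dvd int u * (int y1 - int y2)"
    using h by (simp add: cong_iff_dvd_diff cong_int_iff[symmetric] algebra_simps)
  hence "int g * int m dvd int g * (int u' * (int y1 - int y2))" using u m by (simp add: algebra_simps)
  hence "int m dvd int u' * (int y1 - int y2)" using g0 by simp
  moreover have "coprime (int m) (int u')" using cop by (simp add: coprime_commute)
  ultimately have "int m dvd (int y1 - int y2)"
    using coprime_dvd_mult_right_iff by blast
  hence "[y1 = y2] (mod m)" by (simp add: cong_iff_dvd_diff cong_int_iff[symmetric])
  moreover have "q div g = m" using m g0 by simp
  ultimately show ?thesis unfolding g_def by simp
qed

lemma L1:
  fixes u q c :: nat
  assumes q: "q > 0"
  shows "card {y. y < q \<and> [u*y = c] (mod q)} \<le> gcd u q"
proof -
  define g where "g = gcd u q"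
  define m where "m = q div g"
  have g0: "g > 0" using q g_def by simp
  have qm: "q = m * g" unfolding m_def g_def by simp
  let ?S = "{y. y < q \<and> [u*y = c] (mod q)}"
  have "inj_on (\<lambda>y. y div m) ?S"
  proof (rule inj_onI)
    fix y1 y2 assume a: "y1 \<in> ?S" "y2 \<in> ?S" "y1 div m = y2 div m"
    have "[u*y1 = u*y2] (mod q)" using a by (metis (mono_tags, lifting) cong_sym cong_trans mem_Collect_eq)
    hence "[y1 = y2] (mod m)" using cancel_gcd q unfolding m_def g_def by blast
    hence "y1 mod m = y2 mod m" by (simp add: cong_def)
    thus "y1 = y2" using a(3) by (metis div_mult_mod_eq)
  qed
  moreover have "(\<lambda>y. y div m) ` ?S \<subseteq> {..<g}"
  proof
    fix z assume "z \<in> (\<lambda>y. y div m) ` ?S"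
    then obtain y where y: "y < q" "z = y div m" by auto
    have "m > 0" using q qm by (metis gr0I mult_is_0)
    thus "z \<in> {..<g}" using y qm by (simp add: div_less_iff_less_mult mult.commute)
  qed
  ultimately have "card ?S \<le> card {..<g}"
    by (metis card_inj_on_le finite_lessThan)
  thus ?thesis unfolding g_def by simp
qed

lemma L2a:
  fixes u w q :: nat
  assumes q: "q > 0"
  shows "card {(x,y). x < q \<and> y < q \<and> [u*y = x*w] (mod q)} \<le> q * gcd u q"
proof -
  have e: "{(x,y). x < q \<and> y < q \<and> [u*y = x*w] (mod q)} =
        (SIGMA x:{..<q}. {y. y < q \<and> [u*y = x*w] (mod q)})" by auto
  have "card (SIGMA x:{..<q}. {y. y < q \<and> [u*y = x*w] (mod q)})
        = (\<Sum>x<q. card {y. y < q \<and> [u*y = x*w] (mod q)})" by simp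
  also have "\<dots> \<le> (\<Sum>x<q. gcd u q)" by (intro sum_mono L1 q)
  finally show ?thesis using e by simp
qed

lemma L2b:
  fixes u w q :: nat
  assumes q: "q > 0"
  shows "card {(x,y). x < q \<and> y < q \<and> [u*y = x*w] (mod q)} \<le> q * gcd w q"
proof -
  have e: "{(x,y). x < q \<and> y < q \<and> [u*y = x*w] (mod q)} =
        prod.swap ` (SIGMA y:{..<q}. {x. x < q \<and> [w*x = u*y] (mod q)})"
    by (auto simp: cong_sym_eq mult.commute image_iff)
  have "card (prod.swap ` (SIGMA y:{..<q}. {x. x < q \<and> [w*x = u*y] (mod q)}))
       = card (SIGMA y:{..<q}. {x. x < q \<and> [w*x = u*y] (mod q)})"
    by (rule card_image) (simp add: inj_on_def)
  also have "\<dots> = (\<Sum>y<q. card {x. x < q \<and> [w*x = u*y] (mod q)})" by simp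
  also have "\<dots> \<le> (\<Sum>y<q. gcd w q)" by (intro sum_mono L1 q)
  finally show ?thesis using e by simp
qed

lemma min4:
  fixes N q a b c d :: nat
  assumes "N \<le> q*a" "N \<le> q*b" "N \<le> q*c" "N \<le> q*d"
  shows "real N \<le> real q * sqrt (real (min a d)) * sqrt (real (min c b))"
proof -
  define m where "m = min (min a d) (min c b)"
  have "N \<le> q * m" using assms unfolding m_def by (simp add: min_def)
  hence "real N \<le> real q * real m" by (metis of_nat_le_iff of_nat_mult)
  also have "real m = sqrt (real m) * sqrt (real m)" by simp
  also have "real q * (sqrt (real m) * sqrt (real m)) \<le> real q * (sqrt (real (min a d)) * sqrt (real (min c b)))"
    by (intro mult_left_mono mult_mono) (auto simp: m_def)
  finally show ?thesis by (simp add: mult.assoc)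
qed

definition wt :: "nat \<Rightarrow> nat \<Rightarrow> nat \<Rightarrow> real" where
  "wt q a b = sqrt (real (min (gcd a q) (gcd b q)))"

definition PP :: "nat \<Rightarrow> (nat \<times> nat) set" where
  "PP q = {x \<in> {..<q} \<times> {..<q}. [fst x * snd x = 0] (mod q)}"

definition FF :: "nat \<Rightarrow> nat \<times> nat \<Rightarrow> nat \<times> nat \<Rightarrow> (nat \<times> nat) set" where
  "FF q x y = {(a4,b4). a4 < q \<and> b4 < q \<and> [fst x * b4 = a4 * snd y] (mod q) \<and> [fst y * b4 = a4 * snd x] (mod q)}"

lemma FF_bound:
  assumes q: "q > 0"
  shows "real (card (FF q x y)) \<le> real q * wt q (fst x) (snd x) * wt q (fst y) (snd y)"
proof -
  let ?E1 = "{(a4,b4). a4 < q \<and> b4 < q \<and> [fst x * b4 = a4 * snd y] (mod q)}"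
  let ?E2 = "{(a4,b4). a4 < q \<and> b4 < q \<and> [fst y * b4 = a4 * snd x] (mod q)}"
  have fin1: "finite ?E1" by (rule finite_subset[of _ "{..<q} \<times> {..<q}"]) auto
  have fin2: "finite ?E2" by (rule finite_subset[of _ "{..<q} \<times> {..<q}"]) auto
  have s1: "FF q x y \<subseteq> ?E1" and s2: "FF q x y \<subseteq> ?E2" unfolding FF_def by auto
  have c1: "card (FF q x y) \<le> card ?E1" by (rule card_mono[OF fin1 s1])
  have c2: "card (FF q x y) \<le> card ?E2" by (rule card_mono[OF fin2 s2])
  have "card (FF q x y) \<le> q * gcd (fst x) q" using c1 L2a[OF q, of "fst x" "snd y"] by linarith
  moreover have "card (FF q x y) \<le> q * gcd (snd y) q" using c1 L2b[OF q, of "fst x" "snd y"] by linarith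
  moreover have "card (FF q x y) \<le> q * gcd (fst y) q" using c2 L2a[OF q, of "fst y" "snd x"] by linarith
  moreover have "card (FF q x y) \<le> q * gcd (snd x) q" using c2 L2b[OF q, of "fst y" "snd x"] by linarith
  ultimately show ?thesis using min4 unfolding wt_def by blast
qed

lemma main_count:
  assumes q: "q > 0"
  shows "real (card (sol_set q)) \<le> real q * (\<Sum>x\<in>PP q. wt q (fst x) (snd x))^2"
proof -
  define h where "h = (\<lambda>(a2::nat, a3::nat, a4::nat, b2::nat, b3::nat, b4::nat). ((a2,b3),((a3,b2),(a4,b4))))"
  have finP: "finite (PP q)" unfolding PP_def by auto
  have finF: "finite (FF q x y)" for x y
    by (rule finite_subset[of _ "{..<q} \<times> {..<q}"]) (auto simp: FF_def)
  have inj: "inj_on h (sol_set q)" unfolding h_def inj_on_def by auto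
  have sub: "h ` sol_set q \<subseteq> (SIGMA x:PP q. SIGMA y:PP q. FF q x y)"
    unfolding h_def sol_set_def PP_def FF_def by auto
  have fin: "finite (SIGMA x:PP q. SIGMA y:PP q. FF q x y)"
    using finP finF by auto
  have "card (sol_set q) = card (h ` sol_set q)" using inj by (simp add: card_image)
  also have "\<dots> \<le> card (SIGMA x:PP q. SIGMA y:PP q. FF q x y)" by (rule card_mono[OF fin sub])
  also have "\<dots> = (\<Sum>x\<in>PP q. \<Sum>y\<in>PP q. card (FF q x y))"
    using finP finF by (simp add: card_SigmaI)
  finally have "real (card (sol_set q)) \<le> (\<Sum>x\<in>PP q. \<Sum>y\<in>PP q. real (card (FF q x y)))"
    by (metis (mono_tags, lifting) of_nat_le_iff of_nat_sum sum.cong)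
  also have "\<dots> \<le> (\<Sum>x\<in>PP q. \<Sum>y\<in>PP q. real q * wt q (fst x) (snd x) * wt q (fst y) (snd y))"
    by (intro sum_mono FF_bound q)
  also have "\<dots> = (\<Sum>x\<in>PP q. real q * (wt q (fst x) (snd x) * (\<Sum>y\<in>PP q. wt q (fst y) (snd y))))"
    by (simp add: sum_distrib_left mult.assoc)
  also have "\<dots> = real q * (\<Sum>x\<in>PP q. wt q (fst x) (snd x) * (\<Sum>y\<in>PP q. wt q (fst y) (snd y)))"
    by (simp only: sum_distrib_left)
  also have "\<dots> = real q * ((\<Sum>x\<in>PP q. wt q (fst x) (snd x)) * (\<Sum>y\<in>PP q. wt q (fst y) (snd y)))"
    by (simp only: sum_distrib_right)
  also have "\<dots> = real q * (\<Sum>x\<in>PP q. wt q (fst x) (snd x))^2"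
    by (simp add: power2_eq_square)
  finally show ?thesis .
qed

lemma gcd_pow:
  fixes p n b :: nat
  assumes p: "prime p"
  shows "\<exists>j\<le>n. gcd b (p^n) = p^j"
  using divides_primepow_nat[OF p, of "gcd b (p^n)" n] by auto

lemma card_mult:
  fixes d q :: nat
  assumes d: "d > 0" "d dvd q"
  shows "card {a. a < q \<and> d dvd a} = q div d"
proof -
  have "{a. a < q \<and> d dvd a} = (\<lambda>k. d*k) ` {..<q div d}"
  proof (intro equalityI subsetI)
    fix a assume "a \<in> {a. a < q \<and> d dvd a}"
    then obtain k where a: "a = d*k" "d*k < q" by auto
    hence "k < q div d" using d by (metis dvd_mult_div_cancel mult_less_cancel1)
    thus "a \<in> (\<lambda>k. d*k) ` {..<q div d}" using a by auto
  next
    fix a assume "a \<in> (\<lambda>k. d*k) ` {..<q div d}"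
    then obtain k where a: "a = d*k" "k < q div d" by auto
    hence "d*k < q" using d by (metis dvd_mult_div_cancel mult_less_cancel1)
    thus "a \<in> {a. a < q \<and> d dvd a}" using a by auto
  qed
  moreover have "inj_on (\<lambda>k. d*k) {..<q div d}" using d by (simp add: inj_on_def)
  ultimately show ?thesis by (simp add: card_image)
qed

lemma key_div:
  fixes p n a b j :: nat
  assumes p: "prime p" and g: "gcd b (p^n) = p^j" and j: "j \<le> n"
    and c: "[a*b = 0] (mod p^n)"
  shows "p^(n-j) dvd a"
proof (cases "j = n")
  case True thus ?thesis by simp
next
  case False
  hence jn: "j < n" using j by simp
  have p1: "p > 1" using p prime_gt_1_nat by blast
  have "p^j dvd b" using g by (metis gcd_dvd1)
  then obtain b' where b: "b = p^j * b'" by (auto elim: dvdE)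
  have npb: "\<not> p dvd b'"
  proof
    assume "p dvd b'"
    hence "p^(Suc j) dvd b" using b by simp
    moreover have "p^(Suc j) dvd p^n" by (metis Suc_leI jn le_imp_power_dvd)
    ultimately have "p^(Suc j) dvd p^j" using g by (metis gcd_greatest)
    hence "p^(Suc j) \<le> p^j" using p1 by (simp add: dvd_imp_le)
    thus False using p1 by simp
  qed
  hence "coprime p b'" using p prime_imp_coprime by blast
  hence cop: "coprime (p^(n-j)) b'" by simp
  have "p^n dvd a*b" using c by (simp add: cong_0_iff)
  hence "p^j * p^(n-j) dvd p^j * (a*b')" using b j
    by (metis le_add_diff_inverse power_add mult.left_commute)
  hence "p^(n-j) dvd a*b'" using p1 by simp
  thus ?thesis using cop coprime_dvd_mult_left_iff by blast
qed

lemma inner_count: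
  fixes p n b j :: nat
  assumes p: "prime p" and g: "gcd b (p^n) = p^j" and j: "j \<le> n"
  shows "card {a. a < p^n \<and> [a*b = 0] (mod p^n) \<and> gcd b (p^n) \<le> gcd a (p^n)} \<le> p^(n - max j (n-j))"
proof -
  have p1: "p > 1" using p prime_gt_1_nat by blast
  let ?M = "max j (n-j)"
  have sub: "{a. a < p^n \<and> [a*b = 0] (mod p^n) \<and> gcd b (p^n) \<le> gcd a (p^n)} \<subseteq> {a. a < p^n \<and> p^?M dvd a}"
  proof
    fix a assume a: "a \<in> {a. a < p^n \<and> [a*b = 0] (mod p^n) \<and> gcd b (p^n) \<le> gcd a (p^n)}"
    have d1: "p^(n-j) dvd a" using key_div[OF p g j] a by blast
    obtain k where k: "k \<le> n" "gcd a (p^n) = p^k" using gcd_pow[OF p] by blast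
    have "p^j \<le> p^k" using a g k by simp
    hence "j \<le> k" using p1 by simp
    hence "p^j dvd p^k" by (simp add: le_imp_power_dvd)
    hence d2: "p^j dvd a" using k by (metis gcd_dvd1 dvd_trans)
    have "p^?M dvd a" using d1 d2 by (cases "j \<le> n - j") (simp_all add: max_def)
    thus "a \<in> {a. a < p^n \<and> p^?M dvd a}" using a by simp
  qed
  have Mn: "?M \<le> n" using j by simp
  have "card {a. a < p^n \<and> [a*b = 0] (mod p^n) \<and> gcd b (p^n) \<le> gcd a (p^n)} \<le> card {a. a < p^n \<and> p^?M dvd a}"
    by (rule card_mono[OF _ sub]) simp
  also have "\<dots> = p^n div p^?M"
  proof (rule card_mult)
    show "p^?M > 0" using p1 by simp
    show "p^?M dvd p^n" using Mn by (rule le_imp_power_dvd)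
  qed
  also have "\<dots> = p^(n - ?M)" using p1 Mn by (simp add: power_diff)
  finally show ?thesis .
qed

lemma card_level:
  fixes p n j :: nat
  assumes p: "prime p" and j: "j \<le> n"
  shows "card {b. b < p^n \<and> gcd b (p^n) = p^j} \<le> p^(n-j)"
proof -
  have p1: "p > 1" using p prime_gt_1_nat by blast
  have "card {b. b < p^n \<and> gcd b (p^n) = p^j} \<le> card {b. b < p^n \<and> p^j dvd b}"
    by (rule card_mono) (auto, metis gcd_dvd1)
  also have "\<dots> = p^n div p^j"
    by (rule card_mult) (use p1 j in \<open>simp_all add: le_imp_power_dvd\<close>)
  also have "\<dots> = p^(n-j)" using p1 j by (simp add: power_diff)
  finally show ?thesis .
qed

lemma exp_bound:
  fixes p n j :: nat
  assumes p1: "p > 1" and j: "j \<le> n"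
  shows "sqrt (real p ^ j) * real (p^(n - max j (n-j))) * real (p^(n-j)) \<le> real p powr (5 * real n / 4)"
proof -
  have pp: "real p > 0" using p1 by simp
  have e1: "sqrt (real p ^ j) = real p powr (real j / 2)"
    using pp by (simp add: powr_half_sqrt[symmetric] powr_realpow[symmetric] powr_powr)
  have e2: "real (p^(n - max j (n-j))) = real p powr (real n - real (max j (n-j)))"
    using pp j by (simp add: powr_realpow[symmetric] of_nat_diff)
  have e3: "real (p^(n-j)) = real p powr (real n - real j)"
    using pp j by (simp add: powr_realpow[symmetric] of_nat_diff)
  have "sqrt (real p ^ j) * real (p^(n - max j (n-j))) * real (p^(n-j))
        = real p powr (real j / 2 + (real n - real (max j (n-j))) + (real n - real j))"
    by (simp only: e1 e2 e3 powr_add)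
  also have "\<dots> \<le> real p powr (5 * real n / 4)"
    using p1 j by (intro powr_mono) (auto simp: max_def)
  finally show ?thesis .
qed

lemma T_bound:
  fixes p n :: nat
  assumes p: "prime p"
  shows "(\<Sum>x\<in>PP (p^n). wt (p^n) (fst x) (snd x)) \<le> 2 * (real n + 1) * real p powr (5 * real n / 4)"
proof -
  define q where "q = p^n"
  have p1: "p > 1" using p prime_gt_1_nat by blast
  have q0: "q > 0" unfolding q_def using p1 by simp
  define v where "v = (\<lambda>a b. if gcd b q \<le> gcd a q then sqrt (real (gcd b q)) else 0)"
  define A where "A = (\<lambda>b. {a. a < q \<and> [a*b = 0] (mod q) \<and> gcd b q \<le> gcd a q})"
  define Y where "Y = (\<lambda>j. sqrt (real p ^ j) * real (p^(n - max j (n-j))))"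
  have finP: "finite (PP q)" unfolding PP_def by auto
  have wv: "wt q a b \<le> v a b + v b a" for a b
    unfolding wt_def v_def by (auto simp: min_def)
  have swapP: "prod.swap ` PP q = PP q"
    unfolding PP_def by (auto simp: mult.commute image_iff)
  have sym: "(\<Sum>x\<in>PP q. v (snd x) (fst x)) = (\<Sum>x\<in>PP q. v (fst x) (snd x))"
  proof -
    have "(\<Sum>x\<in>PP q. v (fst x) (snd x)) = (\<Sum>x\<in>prod.swap ` PP q. v (fst x) (snd x))"
      using swapP by simp
    also have "\<dots> = (\<Sum>x\<in>PP q. v (snd x) (fst x))"
      by (subst sum.reindex) (auto simp: inj_on_def)
    finally show ?thesis by simp
  qed
  have step_a: "(\<Sum>x\<in>PP q. wt q (fst x) (snd x)) \<le> 2 * (\<Sum>x\<in>PP q. v (fst x) (snd x))"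
  proof -
    have "(\<Sum>x\<in>PP q. wt q (fst x) (snd x)) \<le> (\<Sum>x\<in>PP q. v (fst x) (snd x) + v (snd x) (fst x))"
      by (intro sum_mono wv)
    also have "\<dots> = 2 * (\<Sum>x\<in>PP q. v (fst x) (snd x))"
      using sym by (simp add: sum.distrib)
    finally show ?thesis .
  qed
  have finA: "finite (A b)" for b unfolding A_def by auto
  have step_c: "(\<Sum>x\<in>PP q. v (fst x) (snd x)) = (\<Sum>b<q. real (card (A b)) * sqrt (real (gcd b q)))"
  proof -
    have "(\<Sum>x\<in>PP q. v (fst x) (snd x)) = (\<Sum>x\<in>{x\<in>PP q. gcd (snd x) q \<le> gcd (fst x) q}. sqrt (real (gcd (snd x) q)))"
      using finP by (simp add: sum.inter_filter v_def)
    also have "{x\<in>PP q. gcd (snd x) q \<le> gcd (fst x) q} = prod.swap ` (SIGMA b:{..<q}. A b)"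
      unfolding PP_def A_def by (auto simp: image_iff)
    also have "(\<Sum>x\<in>prod.swap ` (SIGMA b:{..<q}. A b). sqrt (real (gcd (snd x) q)))
          = (\<Sum>x\<in>(SIGMA b:{..<q}. A b). sqrt (real (gcd (fst x) q)))"
      by (subst sum.reindex) (auto simp: inj_on_def)
    also have "\<dots> = (\<Sum>b<q. \<Sum>a\<in>A b. sqrt (real (gcd b q)))"
      using sum.Sigma[of "{..<q}" A "\<lambda>b a. sqrt (real (gcd b q))"] finA by (simp add: split_def)
    also have "\<dots> = (\<Sum>b<q. real (card (A b)) * sqrt (real (gcd b q)))"
      by simp
    finally show ?thesis .
  qed
  have step_d: "real (card (A b)) * sqrt (real (gcd b q)) \<le> (\<Sum>j\<le>n. if gcd b q = p^j then Y j else 0)" for b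
  proof -
    obtain j where j: "j \<le> n" "gcd b q = p^j" using gcd_pow[OF p] unfolding q_def by blast
    have "card (A b) \<le> p^(n - max j (n-j))"
      using inner_count[OF p _ j(1), of b] j(2) unfolding A_def q_def by simp
    hence "real (card (A b)) \<le> real (p^(n - max j (n-j)))" by (simp only: of_nat_le_iff)
    hence "sqrt (real p ^ j) * real (card (A b)) \<le> sqrt (real p ^ j) * real (p^(n - max j (n-j)))"
      by (rule mult_left_mono) simp
    hence "real (card (A b)) * sqrt (real (gcd b q)) \<le> Y j"
      unfolding Y_def using j(2) by (simp add: mult.commute)
    also have "Y j = (if gcd b q = p^j then Y j else 0)" using j by simp
    also have "\<dots> \<le> (\<Sum>j\<le>n. if gcd b q = p^j then Y j else 0)"
      by (rule member_le_sum) (auto simp: Y_def j(1))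
    finally show ?thesis .
  qed
  have step_e: "(\<Sum>b<q. \<Sum>j\<le>n. if gcd b q = p^j then Y j else 0) \<le> (real n + 1) * real p powr (5 * real n / 4)"
  proof -
    have "(\<Sum>b<q. \<Sum>j\<le>n. if gcd b q = p^j then Y j else 0) = (\<Sum>j\<le>n. \<Sum>b<q. if gcd b q = p^j then Y j else 0)"
      by (rule sum.swap)
    also have "\<dots> = (\<Sum>j\<le>n. Y j * real (card {b. b < p^n \<and> gcd b (p^n) = p^j}))"
    proof (rule sum.cong[OF refl])
      fix j
      have "(\<Sum>b<q. if gcd b q = p^j then Y j else 0) = (\<Sum>b\<in>{b\<in>{..<q}. gcd b q = p^j}. Y j)"
        using sum.inter_filter[where A="{..<q}" and P="\<lambda>b. gcd b q = p^j" and g="\<lambda>b. Y j"] by simp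
      also have "{b\<in>{..<q}. gcd b q = p^j} = {b. b < p^n \<and> gcd b (p^n) = p^j}" unfolding q_def by auto
      finally show "(\<Sum>b<q. if gcd b q = p^j then Y j else 0) = Y j * real (card {b. b < p^n \<and> gcd b (p^n) = p^j})"
        by simp
    qed
    also have "\<dots> \<le> (\<Sum>j\<le>n. Y j * real (p^(n-j)))"
    proof (rule sum_mono)
      fix j assume "j \<in> {..n}"
      hence "card {b. b < p^n \<and> gcd b (p^n) = p^j} \<le> p^(n-j)" using card_level[OF p] by simp
      hence "real (card {b. b < p^n \<and> gcd b (p^n) = p^j}) \<le> real (p^(n-j))" by (simp only: of_nat_le_iff)
      thus "Y j * real (card {b. b < p^n \<and> gcd b (p^n) = p^j}) \<le> Y j * real (p^(n-j))"
        by (rule mult_left_mono) (simp add: Y_def)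
    qed
    also have "\<dots> \<le> (\<Sum>j\<le>n. real p powr (5 * real n / 4))"
      by (rule sum_mono) (unfold Y_def, rule exp_bound[OF p1], simp)
    also have "\<dots> = (real n + 1) * real p powr (5 * real n / 4)" by simp
    finally show ?thesis .
  qed
  have "(\<Sum>x\<in>PP q. wt q (fst x) (snd x)) \<le> 2 * (\<Sum>b<q. \<Sum>j\<le>n. if gcd b q = p^j then Y j else 0)"
  proof -
    have "(\<Sum>b<q. real (card (A b)) * sqrt (real (gcd b q))) \<le> (\<Sum>b<q. \<Sum>j\<le>n. if gcd b q = p^j then Y j else 0)"
      by (rule sum_mono, rule step_d)
    thus ?thesis using step_a step_c by simp
  qed
  also have "\<dots> \<le> 2 * ((real n + 1) * real p powr (5 * real n / 4))" using step_e by simp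
  also have "\<dots> = 2 * (real n + 1) * real p powr (5 * real n / 4)" by simp
  finally show ?thesis unfolding q_def .
qed

theorem lemma5p2:
  shows "\<exists>C::real. \<forall>(p::nat) (n::nat). prime p \<longrightarrow> n \<ge> 1 \<longrightarrow>
           real (card (sol_set (p ^ n))) \<le> C * real n ^ 2 * real (p ^ n) powr (7/2)"
proof (intro exI allI impI)
  fix p n :: nat
  assume p: "prime p" and n: "n \<ge> 1"
  have p1: "p > 1" using p prime_gt_1_nat by blast
  have pp: "real p > 0" using p1 by simp
  define T where "T = (\<Sum>x\<in>PP (p^n). wt (p^n) (fst x) (snd x))"
  define B where "B = 2 * (real n + 1) * real p powr (5 * real n / 4)"
  have T0: "T \<ge> 0" unfolding T_def wt_def by (intro sum_nonneg) simp
  have TB: "T \<le> B" unfolding T_def B_def by (rule T_bound[OF p])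
  have "real (card (sol_set (p ^ n))) \<le> real (p^n) * T^2"
    unfolding T_def by (rule main_count) (use p1 in simp)
  also have "\<dots> \<le> real (p^n) * B^2"
    by (intro mult_left_mono power_mono T0 TB) simp
  also have "B^2 = 4 * (real n + 1)^2 * real p powr (5 * real n / 2)"
  proof -
    have e: "real p powr (5 * real n / 4) * real p powr (5 * real n / 4) = real p powr (5 * real n / 2)"
      by (simp add: powr_add[symmetric])
    have "B^2 = 4 * (real n + 1)^2 * (real p powr (5 * real n / 4) * real p powr (5 * real n / 4))"
      unfolding B_def by (simp add: power2_eq_square algebra_simps)
    thus ?thesis using e by simp
  qed
  also have "real (p^n) = real p powr real n" using pp by (simp add: powr_realpow)
  also have "real p powr real n * (4 * (real n + 1)^2 * real p powr (5 * real n / 2))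
      = 4 * (real n + 1)^2 * real p powr (7 * real n / 2)"
    by (simp add: powr_add[symmetric] algebra_simps)
  also have "\<dots> \<le> 16 * real n ^ 2 * real p powr (7 * real n / 2)"
  proof -
    have "(real n + 1)^2 \<le> (2 * real n)^2" using n by (intro power_mono) auto
    hence "4 * (real n + 1)^2 \<le> 16 * real n ^ 2" by (simp add: power_mult_distrib)
    thus ?thesis by (intro mult_right_mono) auto
  qed
  also have "real p powr (7 * real n / 2) = real (p^n) powr (7/2)"
    using pp by (simp add: powr_realpow[symmetric] powr_powr mult.commute)
  finally show "real (card (sol_set (p ^ n))) \<le> 16 * real n ^ 2 * real (p ^ n) powr (7/2)" .
qed

end
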